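(* Let $\mathbb{P}$ be a joint distribution over reports $\mathbf{p}^1,\dots,\mathbf{p}^m\in\Delta^n$ and outcome $J\in[n]$ satisfying the calibration property, and let $L(\mathbf{w}) := -\ln p^*_J(\mathbf{w})$ with $\partial_i L(\mathbf{w}) := \sum_{\ell=1}^n p^*_\ell(\mathbf{w})\ln p^i_\ell - \ln p^i_J$. Then for any weight vector $\mathbf{w}\in\Delta^m$, any $i\in[m]$ and any $\zeta\ge 0$, \[\Pr[\partial_i L(\mathbf{w}) \ge \zeta] \le n e^{-\zeta}\qquad\text{and}\qquad \Pr\left[\partial_i L(\mathbf{w}) \le -\frac{\zeta}{w_i}\right] \le m n^2 e^{-\zeta/n}.\]
   Context: $\Delta^k$ is the probability simplex in $\mathbb{R}^k$. For reports $\mathbf{p}^1,\dots,\mathbf{p}^m\in\Delta^n$ and $\mathbf{w}\in\Delta^m$, the logarithmic pool is $p^*_j(\mathbf{w}) = \frac{\prod_{k=1}^m (p^k_j)^{w_k}}{\sum_{\ell=1}^n\prod_{k=1}^m (p^k_\ell)^{w_k}}$. A joint distribution $\mathbb{P}$ over reports and outcome $J$ satisfies the calibration property if for every expert $i$, every $\mathbf{p}\in\Delta^n$ and every $j\in[n]$, $\Pr[J=j\mid \mathbf{p}^i=\mathbf{p}] = p_j$. *)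

theory Defs
  imports "HOL-Probability.Probability"
begin

definition prob_simplex :: "(real ^ 'k::finite) set" where
  "prob_simplex = {v. (\<forall>k. 0 \<le> v $ k) \<and> (\<Sum>k\<in>UNIV. v $ k) = 1}"

definition rpow :: "real \<Rightarrow> real \<Rightarrow> real" where
  "rpow x a = (if a = 0 then 1 else x powr a)"

definition log_pool :: "('m::finite \<Rightarrow> real ^ 'n::finite) \<Rightarrow> real ^ 'm \<Rightarrow> 'n \<Rightarrow> real" where
  "log_pool P w j =
     (\<Prod>k\<in>UNIV. rpow (P k $ j) (w $ k)) /
     (\<Sum>l\<in>UNIV. \<Prod>k\<in>UNIV. rpow (P k $ l) (w $ k))"

definition pool_loss :: "('m::finite \<Rightarrow> real ^ 'n::finite) \<Rightarrow> real ^ 'm \<Rightarrow> 'n \<Rightarrow> real" where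
  "pool_loss P w J = - ln (log_pool P w J)"

definition dL :: "('m::finite \<Rightarrow> real ^ 'n::finite) \<Rightarrow> real ^ 'm \<Rightarrow> 'm \<Rightarrow> 'n \<Rightarrow> real" where
  "dL P w i J = (\<Sum>l\<in>UNIV. log_pool P w l * ln (P i $ l)) - ln (P i $ J)"

text \<open>Calibration: Pr[J = j | p^i] = p^i_j almost surely, i.e. (definition of conditional
  probability) for every Borel set B of reports, Pr[J = j and p^i in B] = E[p^i_j 1{p^i in B}].\<close>
definition calibrated :: "'a measure \<Rightarrow> ('a \<Rightarrow> 'm \<Rightarrow> real ^ 'n) \<Rightarrow> ('a \<Rightarrow> 'n) \<Rightarrow> bool" where
  "calibrated M P J \<longleftrightarrow>
     (\<forall>i j. \<forall>B\<in>sets borel.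
        measure M {x\<in>space M. J x = j \<and> P x i \<in> B} =
        (\<integral>x. indicator B (P x i) * (P x i $ j) \<partial>M))"

end

theory Submission
  imports Defs
begin

lemma simplex_le1:
  assumes "v \<in> prob_simplex" shows "0 \<le> v $ k" "v $ k \<le> (1::real)"
proof -
  have n: "\<forall>k. 0 \<le> v $ k" and s: "(\<Sum>k\<in>UNIV. v $ k) = 1" using assms by (auto simp: prob_simplex_def)
  show "0 \<le> v $ k" using n by auto
  have "v $ k \<le> (\<Sum>k\<in>UNIV. v $ k)" by (rule member_le_sum) (use n in auto)
  then show "v $ k \<le> 1" using s by simp
qed

lemma rpow_nonneg: "0 \<le> rpow x a" by (simp add: rpow_def)

lemma rpow_le1: "0 \<le> a \<Longrightarrow> 0 \<le> x \<Longrightarrow> x \<le> 1 \<Longrightarrow> rpow x a \<le> 1"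
  by (simp add: rpow_def powr_le1)

lemma log_pool_nonneg: "0 \<le> log_pool P w j"
  unfolding log_pool_def by (intro divide_nonneg_nonneg sum_nonneg prod_nonneg) (auto simp: rpow_nonneg)

lemma point1:
  fixes P :: "'m::finite \<Rightarrow> real ^ 'n::finite"
  assumes "\<forall>k. P k \<in> prob_simplex" "0 \<le> \<zeta>" "\<zeta> \<le> dL P w i J"
  shows "P i $ J \<le> exp (- \<zeta>)"
proof -
  have "(\<Sum>l\<in>UNIV. log_pool P w l * ln (P i $ l)) \<le> 0"
  proof (intro sum_nonpos)
    fix l
    have "ln (P i $ l) \<le> 0"
      using simplex_le1[OF assms(1)[rule_format, of i], of l]
      by (cases "P i $ l = 0") auto
    then show "log_pool P w l * ln (P i $ l) \<le> 0"
      by (rule mult_nonneg_nonpos[OF log_pool_nonneg])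
  qed
  then have z: "\<zeta> \<le> - ln (P i $ J)" using assms(3) by (simp add: dL_def)
  have p0: "0 \<le> P i $ J" using simplex_le1[OF assms(1)[rule_format, of i]] by auto
  show ?thesis
  proof (cases "P i $ J = 0")
    case True then show ?thesis by simp
  next
    case False
    then have "0 < P i $ J" using p0 by auto
    then have "P i $ J = exp (ln (P i $ J))" by simp
    also have "\<dots> \<le> exp (- \<zeta>)" using z by simp
    finally show ?thesis .
  qed
qed

lemma point2:
  fixes P :: "'m::finite \<Rightarrow> real ^ 'n::finite"
  assumes S: "\<forall>k. P k \<in> prob_simplex" and W: "w \<in> prob_simplex" and wi: "0 < w $ i"
    and ev: "dL P w i J \<le> - \<zeta> / w $ i"
  shows "\<exists>k. P k $ J \<le> real CARD('n) * exp (- \<zeta>)"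
proof (cases "\<exists>k. P k $ J = 0")
  case True
  then obtain k where "P k $ J = 0" by auto
  then show ?thesis by (intro exI[of _ k]) simp
next
  case False
  define q where "q l = (\<Prod>k\<in>UNIV. rpow (P k $ l) (w $ k))" for l
  define Z where "Z = (\<Sum>l\<in>UNIV. q l)"
  define n where "n = real CARD('n)"
  have npos: "0 < n" unfolding n_def by simp
  have lp: "log_pool P w l = q l / Z" for l by (simp add: log_pool_def q_def Z_def)
  have pnn: "0 \<le> P k $ l" for k l using simplex_le1 S by blast
  have ple: "P k $ l \<le> 1" for k l using simplex_le1 S by blast
  have wnn: "0 \<le> w $ k" for k using simplex_le1 W by blast
  have wsum: "(\<Sum>k\<in>UNIV. w $ k) = 1" using W by (simp add: prob_simplex_def)
  have qnn: "0 \<le> q l" for l unfolding q_def by (intro prod_nonneg) (auto simp: rpow_nonneg)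
  have pos: "0 < P k $ J" for k using False pnn by (metis less_eq_real_def)
  define \<mu> where "\<mu> = Min (range (\<lambda>k. P k $ J))"
  have "\<mu> \<in> range (\<lambda>k. P k $ J)" unfolding \<mu>_def by (intro Min_in) auto
  then obtain k0 where k0: "P k0 $ J = \<mu>" by auto
  have \<mu>le: "\<mu> \<le> P k $ J" for k unfolding \<mu>_def by (intro Min_le) auto
  have \<mu>pos: "0 < \<mu>" using k0 pos by metis
  have "\<mu> = \<mu> powr (\<Sum>k\<in>UNIV. w $ k)" using wsum \<mu>pos by simp
  also have "\<dots> = (\<Prod>k\<in>UNIV. \<mu> powr (w $ k))" using \<mu>pos by (simp add: powr_sum)
  also have "\<dots> = (\<Prod>k\<in>UNIV. rpow \<mu> (w $ k))" using \<mu>pos by (intro prod.cong refl) (simp add: rpow_def)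
  also have "\<dots> \<le> q J" unfolding q_def
  proof (intro prod_mono conjI)
    fix k
    show "0 \<le> rpow \<mu> (w $ k)" by (rule rpow_nonneg)
    show "rpow \<mu> (w $ k) \<le> rpow (P k $ J) (w $ k)"
      using powr_mono2[OF wnn[of k] less_imp_le[OF \<mu>pos] \<mu>le[of k]] by (simp add: rpow_def)
  qed
  finally have \<mu>q: "\<mu> \<le> q J" .
  have qJpos: "0 < q J" using \<mu>pos \<mu>q by linarith
  have ZqJ: "q J \<le> Z" unfolding Z_def by (rule member_le_sum) (auto simp: qnn)
  have Zpos: "0 < Z" using ZqJ qJpos by linarith
  define T where "T = {l. 0 < q l}"
  have qout: "l \<notin> T \<Longrightarrow> q l = 0" for l using qnn[of l] T_def by force
  have piJ: "ln (P i $ J) \<le> 0" using pos[of i] ple[of i J] by simp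
  have qle: "q l \<le> rpow (P i $ l) (w $ i)" for l
  proof -
    have "q l = rpow (P i $ l) (w $ i) * (\<Prod>k\<in>UNIV-{i}. rpow (P k $ l) (w $ k))"
      unfolding q_def by (simp add: prod.remove)
    also have "\<dots> \<le> rpow (P i $ l) (w $ i) * 1"
      by (intro mult_left_mono prod_le_1) (auto simp: rpow_nonneg rpow_le1 wnn pnn ple)
    finally show ?thesis by simp
  qed
  have lnT: "w $ i * (- ln (P i $ l)) \<le> - ln (q l)" if "l \<in> T" for l
  proof -
    have ql: "0 < q l" using that T_def by simp
    then have "0 < rpow (P i $ l) (w $ i)" using qle[of l] by linarith
    then have pil: "0 < P i $ l" using wi pnn[of i l] by (auto simp: rpow_def)
    have "ln (q l) \<le> ln (rpow (P i $ l) (w $ i))" using ql qle[of l] by simp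
    also have "\<dots> = w $ i * ln (P i $ l)" using wi by (simp add: rpow_def)
    finally show ?thesis by simp
  qed
  have "- dL P w i J = ln (P i $ J) + (\<Sum>l\<in>UNIV. (q l / Z) * (- ln (P i $ l)))"
    by (simp add: dL_def lp sum_negf)
  also have "\<dots> \<le> (\<Sum>l\<in>UNIV. (q l / Z) * (- ln (P i $ l)))" using piJ by simp
  also have "\<dots> = (\<Sum>l\<in>T. (q l / Z) * (- ln (P i $ l)))"
    by (rule sum.mono_neutral_right) (auto simp: qout)
  finally have A: "- dL P w i J \<le> (\<Sum>l\<in>T. (q l / Z) * (- ln (P i $ l)))" .
  have B: "w $ i * (\<Sum>l\<in>T. (q l / Z) * (- ln (P i $ l))) \<le> (\<Sum>l\<in>T. (q l / Z) * (- ln (q l)))"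
    unfolding sum_distrib_left
  proof (intro sum_mono)
    fix l assume "l \<in> T"
    have "w $ i * (q l / Z * - ln (P i $ l)) = (q l / Z) * (w $ i * (- ln (P i $ l)))" by simp
    also have "\<dots> \<le> (q l / Z) * (- ln (q l))"
      by (intro mult_left_mono lnT[OF \<open>l \<in> T\<close>]) (use qnn Zpos in auto)
    finally show "w $ i * (q l / Z * - ln (P i $ l)) \<le> q l / Z * - ln (q l)" .
  qed
  have sZ: "(\<Sum>l\<in>T. q l) = Z" unfolding Z_def
    by (rule sum.mono_neutral_left) (auto simp: qout)
  have sT: "(\<Sum>l\<in>T. q l / Z) = 1" using sZ Zpos by (simp add: sum_divide_distrib[symmetric])
  have C: "(\<Sum>l\<in>T. (q l / Z) * (- ln (q l))) \<le> ln n - ln (q J)"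
  proof -
    have eq: "(q l / Z) * ln (q J / (n * q l)) = (q l / Z) * (- ln (q l)) + (q l / Z) * (ln (q J) - ln n)"
      if "l \<in> T" for l
    proof -
      have "0 < q l" using that T_def by simp
      then have h: "ln (q J / (n * q l)) = ln (q J) - ln n - ln (q l)"
        using qJpos npos by (simp add: ln_div ln_mult)
      show ?thesis unfolding h by (simp add: algebra_simps)
    qed
    have "(\<Sum>l\<in>T. (q l / Z) * ln (q J / (n * q l)))
        = (\<Sum>l\<in>T. (q l / Z) * (- ln (q l))) + (\<Sum>l\<in>T. q l / Z) * (ln (q J) - ln n)"
      by (simp only: sum.cong[OF refl eq] sum.distrib sum_distrib_right)
    also have "\<dots> = (\<Sum>l\<in>T. (q l / Z) * (- ln (q l))) + (ln (q J) - ln n)" using sT by simp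
    finally have e1: "(\<Sum>l\<in>T. (q l / Z) * ln (q J / (n * q l)))
        = (\<Sum>l\<in>T. (q l / Z) * (- ln (q l))) + (ln (q J) - ln n)" .
    have "(\<Sum>l\<in>T. (q l / Z) * ln (q J / (n * q l))) \<le> (\<Sum>l\<in>T. (q l / Z) * (q J / (n * q l) - 1))"
    proof (intro sum_mono mult_left_mono)
      fix l assume "l \<in> T"
      then have "0 < q l" using T_def by simp
      then show "ln (q J / (n * q l)) \<le> q J / (n * q l) - 1"
        using qJpos npos by (intro ln_le_minus_one) simp
      show "0 \<le> q l / Z" using qnn Zpos by simp
    qed
    also have "\<dots> = (\<Sum>l\<in>T. q J / (n * Z) - q l / Z)"
    proof (intro sum.cong refl)
      fix l assume "l \<in> T"
      then have "0 < q l" using T_def by simp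
      then show "(q l / Z) * (q J / (n * q l) - 1) = q J / (n * Z) - q l / Z"
        using Zpos npos by (simp add: field_simps)
    qed
    also have "\<dots> = real (card T) * (q J / (n * Z)) - 1" using sT by (simp add: sum_subtractf)
    also have "\<dots> \<le> n * (q J / (n * Z)) - 1"
    proof -
      have "real (card T) \<le> n" unfolding n_def by (simp add: card_mono)
      then show ?thesis using qJpos Zpos npos by (intro diff_right_mono mult_right_mono) auto
    qed
    also have "\<dots> = q J / Z - 1" using npos by simp
    also have "\<dots> \<le> 0" using ZqJ Zpos by simp
    finally show ?thesis using e1 by linarith
  qed
  have "\<zeta> \<le> w $ i * (- dL P w i J)"
  proof -
    have "dL P w i J * w $ i \<le> (- \<zeta> / w $ i) * w $ i" using ev wi by (intro mult_right_mono) auto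
    then have "dL P w i J * w $ i \<le> - \<zeta>" using wi by simp
    then show ?thesis by (simp add: algebra_simps)
  qed
  also have "\<dots> \<le> w $ i * (\<Sum>l\<in>T. (q l / Z) * (- ln (P i $ l)))"
    using A wi by (intro mult_left_mono) auto
  also have "\<dots> \<le> ln n - ln (q J)" using B C by linarith
  finally have "ln (q J) \<le> ln n - \<zeta>" by simp
  then have "q J \<le> exp (ln n - \<zeta>)" using qJpos by (metis exp_le_cancel_iff exp_ln)
  also have "\<dots> = n * exp (- \<zeta>)" using npos by (simp add: exp_diff divide_inverse exp_minus)
  finally show ?thesis using k0 \<mu>q n_def by (intro exI[of _ k0]) auto
qed

lemma single:
  fixes M :: "'a measure"
    and P :: "'a \<Rightarrow> 'm::finite \<Rightarrow> real ^ 'n::finite"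
    and J :: "'a \<Rightarrow> 'n"
  assumes PS: "prob_space M"
    and PM: "\<forall>k. (\<lambda>x. P x k) \<in> borel_measurable M"
    and JM: "J \<in> measurable M (count_space UNIV)"
    and cal: "calibrated M P J"
    and c: "0 \<le> c"
  shows "measure M {x\<in>space M. P x k $ J x \<le> c} \<le> real CARD('n) * c"
proof -
  interpret prob_space M by (rule PS)
  have [measurable]: "J \<in> M \<rightarrow>\<^sub>M count_space UNIV" using JM by simp
  have [measurable]: "(\<lambda>x. P x k) \<in> borel_measurable M" using PM by simp
  define A where "A j = {x\<in>space M. J x = j \<and> P x k \<in> {v. v $ j \<le> c}}" for j
  have Bm: "{v::real^'n. v $ j \<le> c} \<in> sets borel" for j by measurable
  have Am: "A j \<in> sets M" for j unfolding A_def by measurable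
  have "measure M {x\<in>space M. P x k $ J x \<le> c} \<le> measure M (\<Union>j\<in>UNIV. A j)"
    by (intro finite_measure_mono) (auto simp: A_def Am)
  also have "\<dots> \<le> (\<Sum>j\<in>UNIV. measure M (A j))"
    by (intro finite_measure_subadditive_finite) (auto simp: Am)
  also have "\<dots> \<le> (\<Sum>j\<in>(UNIV::'n set). c)"
  proof (rule sum_mono)
    fix j
    have eq: "measure M (A j) = (\<integral>x. indicator {v. v $ j \<le> c} (P x k) * (P x k $ j) \<partial>M)"
      using cal Bm unfolding calibrated_def A_def by blast
    show "measure M (A j) \<le> c"
    proof (cases "integrable M (\<lambda>x. indicator {v. v $ j \<le> c} (P x k) * (P x k $ j))")
      case True
      have "(\<integral>x. indicator {v. v $ j \<le> c} (P x k) * (P x k $ j) \<partial>M) \<le> (\<integral>x. c \<partial>M)"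
        by (intro integral_mono True) (auto simp: indicator_def c)
      then show ?thesis using eq by (simp add: prob_space)
    next
      case False
      then show ?thesis using eq c by (simp add: not_integrable_integral_eq)
    qed
  qed
  also have "\<dots> = real CARD('n) * c" by simp
  finally show ?thesis .
qed

lemma single_meas:
  fixes M :: "'a measure"
    and P :: "'a \<Rightarrow> 'm::finite \<Rightarrow> real ^ 'n::finite"
    and J :: "'a \<Rightarrow> 'n"
  assumes PM: "\<forall>k. (\<lambda>x. P x k) \<in> borel_measurable M"
    and JM: "J \<in> measurable M (count_space UNIV)"
  shows "{x\<in>space M. P x k $ J x \<le> c} \<in> sets M"
proof -
  have [measurable]: "J \<in> M \<rightarrow>\<^sub>M count_space UNIV" using JM by simp
  have [measurable]: "(\<lambda>x. P x k) \<in> borel_measurable M" using PM by simp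
  have "{x\<in>space M. P x k $ J x \<le> c} = (\<Union>j\<in>UNIV. {x\<in>space M. J x = j \<and> P x k $ j \<le> c})"
    by auto
  also have "\<dots> \<in> sets M" by measurable
  finally show ?thesis .
qed

theorem lemma4:
  fixes M :: "'a measure"
    and P :: "'a \<Rightarrow> 'm::finite \<Rightarrow> real ^ 'n::finite"
    and J :: "'a \<Rightarrow> 'n"
    and w :: "real ^ 'm" and i :: 'm and \<zeta> :: real
  assumes "prob_space M"
    and "\<forall>k. (\<lambda>x. P x k) \<in> borel_measurable M"
    and "J \<in> measurable M (count_space UNIV)"
    and "\<forall>x\<in>space M. \<forall>k. P x k \<in> prob_simplex"
    and "calibrated M P J"
    and "w \<in> prob_simplex"
    and "\<zeta> \<ge> 0"
  shows "measure M {x\<in>space M. dL (P x) w i (J x) \<ge> \<zeta>} \<le> real CARD('n) * exp (- \<zeta>)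
       \<and> (w $ i > 0 \<longrightarrow>
         measure M {x\<in>space M. dL (P x) w i (J x) \<le> - \<zeta> / w $ i}
           \<le> real CARD('m) * real CARD('n) ^ 2 * exp (- \<zeta> / real CARD('n)))"
proof (intro conjI impI)
  interpret prob_space M by (rule assms(1))
  have "measure M {x\<in>space M. dL (P x) w i (J x) \<ge> \<zeta>}
      \<le> measure M {x\<in>space M. P x i $ J x \<le> exp (- \<zeta>)}"
    using assms(4,7)
    by (intro finite_measure_mono single_meas[OF assms(2,3)]) (auto intro: point1)
  also have "\<dots> \<le> real CARD('n) * exp (- \<zeta>)"
    by (rule single[OF assms(1,2,3,5)]) simp
  finally show "measure M {x\<in>space M. dL (P x) w i (J x) \<ge> \<zeta>} \<le> real CARD('n) * exp (- \<zeta>)" .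
next
  interpret prob_space M by (rule assms(1))
  assume wi: "w $ i > 0"
  define c where "c = real CARD('n) * exp (- \<zeta>)"
  have c0: "0 \<le> c" unfolding c_def by simp
  have "measure M {x\<in>space M. dL (P x) w i (J x) \<le> - \<zeta> / w $ i}
      \<le> measure M (\<Union>k\<in>UNIV. {x\<in>space M. P x k $ J x \<le> c})"
  proof (intro finite_measure_mono)
    show "(\<Union>k\<in>UNIV. {x\<in>space M. P x k $ J x \<le> c}) \<in> sets M"
      using single_meas[OF assms(2,3)] by auto
    show "{x\<in>space M. dL (P x) w i (J x) \<le> - \<zeta> / w $ i} \<subseteq> (\<Union>k\<in>UNIV. {x\<in>space M. P x k $ J x \<le> c})"
    proof
      fix x assume "x \<in> {x\<in>space M. dL (P x) w i (J x) \<le> - \<zeta> / w $ i}"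
      then have x: "x \<in> space M" "dL (P x) w i (J x) \<le> - \<zeta> / w $ i" by auto
      obtain k where "P x k $ J x \<le> c"
        using point2[of "P x" w i "J x" \<zeta>] x assms(4,6) wi unfolding c_def by blast
      then show "x \<in> (\<Union>k\<in>UNIV. {x\<in>space M. P x k $ J x \<le> c})" using x by auto
    qed
  qed
  also have "\<dots> \<le> (\<Sum>k\<in>UNIV. measure M {x\<in>space M. P x k $ J x \<le> c})"
    using single_meas[OF assms(2,3)] by (intro finite_measure_subadditive_finite) auto
  also have "\<dots> \<le> (\<Sum>k\<in>(UNIV::'m set). real CARD('n) * c)"
    by (intro sum_mono single[OF assms(1,2,3,5) c0])
  also have "\<dots> = real CARD('m) * real CARD('n) ^ 2 * exp (- \<zeta>)"
    by (simp add: c_def power2_eq_square)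
  also have "\<dots> \<le> real CARD('m) * real CARD('n) ^ 2 * exp (- \<zeta> / real CARD('n))"
  proof -
    have "\<zeta> / real CARD('n) \<le> \<zeta>"
    proof -
      have "1 \<le> real CARD('n)" by (simp add: Suc_le_eq)
      then have "\<zeta> * 1 \<le> \<zeta> * real CARD('n)" using assms(7) by (intro mult_left_mono) auto
      then show ?thesis by (simp add: divide_le_eq)
    qed
    then show ?thesis by (intro mult_left_mono) auto
  qed
  finally show "measure M {x\<in>space M. dL (P x) w i (J x) \<le> - \<zeta> / w $ i}
           \<le> real CARD('m) * real CARD('n) ^ 2 * exp (- \<zeta> / real CARD('n))" .
qed

end
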